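(* Let $K$ be a kernel as below, $\mathbf{n}=(n_1,\dots,n_d)\in\mathbb{N}^d$, and suppose $\rho_{\mathbf{j}}(\mathbf{0})\ne0$ for all $\mathbf{j}\in\Omega_{\mathbf{n}}$. Then $\dim SK(\Lambda_{\mathbf{n}})=N=2^dn_1n_2\cdots n_d$. In particular, if $n_1=\dots=n_d=n$ then $\dim SK(\Lambda_{\mathbf{n}})=(2n)^d$.
   Context: $\mathbb{T}^d=(\mathbb{R}/2\pi\mathbb{Z})^d$. Kernel: $K(\mathbf{x})=\sum_{\mathbf{l}\in\mathbb{Z}^d}a_{\mathbf{l}}e^{i\mathbf{l}\cdot\mathbf{x}}$ with $(a_{\mathbf{l}})$ real, $a_{\mathbf{l}}=a_{-\mathbf{l}}$, $\sum_{\mathbf{l}}|a_{\mathbf{l}}|<\infty$. Notation: $\mathbf{x}\cdot\mathbf{y}=\sum_ix_iy_i$; $\mathbf{x}_{\mathbf{k}}=(\pi k_1/n_1,\dots,\pi k_d/n_d)$ for $\mathbf{k}\in\mathbb{Z}^d$, $\Omega_{\mathbf{n}}=\{\mathbf{j}\in\mathbb{Z}^d:0\le j_l\le 2n_l-1\}$, $\Lambda_{\mathbf{n}}=\{\mathbf{x}_{\mathbf{k}}:\mathbf{k}\in\Omega_{\mathbf{n}}\}$, $N=2^dn_1\cdots n_d$. For $\mathbf{j}\in\mathbb{Z}^d$: $\rho_{\mathbf{j}}(\mathbf{x})=\frac{2}{N}\sum_{\mathbf{k}\in\Omega_{\mathbf{n}}}\cos(\mathbf{j}\cdot\mathbf{x}_{\mathbf{k}})K(\mathbf{x}-\mathbf{x}_{\mathbf{k}})$.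 An sk-spline on $\Lambda_{\mathbf{n}}$ (associated with $K$) is a function $s(\mathbf{x})=c+\sum_{\mathbf{k}\in\Omega_{\mathbf{n}}}c_{\mathbf{k}}K(\mathbf{x}-\mathbf{x}_{\mathbf{k}})$ with $c,c_{\mathbf{k}}\in\mathbb{R}$ and $\sum_{\mathbf{k}\in\Omega_{\mathbf{n}}}c_{\mathbf{k}}=0$; $SK(\Lambda_{\mathbf{n}})$ is the real vector space of these. *)

theory Defs
  imports "HOL-Analysis.Analysis" "HOL-Library.Function_Algebras"
begin

text \<open>Points of the torus are represented by vectors in real^'d (dimension d = CARD('d));
  frequencies by integer vectors int^'d.\<close>

definition idot :: "int^'d \<Rightarrow> real^'d \<Rightarrow> real" where
  "idot l x = (\<Sum>i\<in>UNIV. real_of_int (l$i) * x$i)"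

definition kernel :: "(int^'d \<Rightarrow> real) \<Rightarrow> real^'d \<Rightarrow> complex" where
  "kernel a x = (\<Sum>\<^sub>\<infinity>l\<in>UNIV. complex_of_real (a l) * exp (\<i> * complex_of_real (idot l x)))"

definition valid_kernel_coeffs :: "(int^'d \<Rightarrow> real) \<Rightarrow> bool" where
  "valid_kernel_coeffs a \<longleftrightarrow> (\<forall>l. a l = a (-l)) \<and> Infinite_Sum.abs_summable_on a UNIV"

definition grid_pt :: "nat^'d \<Rightarrow> int^'d \<Rightarrow> real^'d" where
  "grid_pt n k = (\<chi> i. pi * real_of_int (k$i) / real (n$i))"

definition Omega :: "nat^'d \<Rightarrow> (int^'d) set" where
  "Omega n = {j. \<forall>i. 0 \<le> j$i \<and> j$i \<le> 2 * int (n$i) - 1}"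

definition Ncard :: "nat^'d \<Rightarrow> nat" where
  "Ncard n = 2 ^ CARD('d) * (\<Prod>i\<in>UNIV. n$i)"

definition rho :: "(int^'d \<Rightarrow> real) \<Rightarrow> nat^'d \<Rightarrow> int^'d \<Rightarrow> real^'d \<Rightarrow> complex" where
  "rho a n j x = complex_of_real (2 / real (Ncard n)) *
     (\<Sum>k\<in>Omega n. complex_of_real (cos (idot j (grid_pt n k))) * kernel a (x - grid_pt n k))"

definition SK :: "(int^'d \<Rightarrow> real) \<Rightarrow> nat^'d \<Rightarrow> (real^'d \<Rightarrow> complex) set" where
  "SK a n = {s. \<exists>(c::real) (ck :: int^'d \<Rightarrow> real). (\<Sum>k\<in>Omega n. ck k) = 0 \<and>
      s = (\<lambda>x. complex_of_real c + (\<Sum>k\<in>Omega n. complex_of_real (ck k) * kernel a (x - grid_pt n k)))}"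

definition rscale :: "real \<Rightarrow> ('a \<Rightarrow> complex) \<Rightarrow> ('a \<Rightarrow> complex)" where
  "rscale r f = (\<lambda>x. complex_of_real r * f x)"

end

theory Submission
  imports Defs
begin


definition ph :: "nat^'d \<Rightarrow> int^'d \<Rightarrow> int^'d \<Rightarrow> real" where
  "ph n v k = idot v (grid_pt n k)"

definition w :: "nat^'d \<Rightarrow> int^'d \<Rightarrow> int^'d \<Rightarrow> complex" where
  "w n v k = exp (\<i> * complex_of_real (ph n v k))"

lemma idot_add: "idot (u + v) x = idot u x + idot v x"
  by (simp add: idot_def distrib_right sum.distrib)
lemma idot_neg: "idot (- v) x = - idot v x"
  by (simp add: idot_def sum_negf)
lemma idot_diff: "idot (u - v) x = idot u x - idot v x"
  by (simp add: idot_def left_diff_distrib sum_subtractf)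
lemma idot_zero[simp]: "idot 0 x = 0"
  by (simp add: idot_def)
lemma idot_minus2: "idot v (x - y) = idot v x - idot v y"
  by (simp add: idot_def right_diff_distrib sum_subtractf)
lemma idot_uminus2: "idot v (- x) = - idot v x"
  by (simp add: idot_def sum_negf)
lemma idot_0_right[simp]: "idot v 0 = 0"
  by (simp add: idot_def)

lemma ph_sym: "ph n v k = ph n k v"
  unfolding ph_def idot_def grid_pt_def
  by (intro sum.cong) auto

lemma w_mult: "w n u k * w n v k = w n (u + v) k"
  by (simp add: w_def ph_def idot_add exp_add[symmetric] distrib_left)
lemma w_zero[simp]: "w n 0 k = 1"
  by (simp add: w_def ph_def)
lemma w_neg: "w n (- v) k * w n v k = 1"
  by (simp add: w_mult)
lemma w_sym: "w n v k = w n k v"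
  by (simp add: w_def ph_sym)
lemma norm_w[simp]: "norm (w n v k) = 1"
  unfolding w_def by (simp add: norm_exp_i_times)

lemma sum_fun_apply: "(\<Sum>k\<in>A. f k) x = (\<Sum>k\<in>A. f k x)"
  by (induction A rule: infinite_finite_induct) auto

lemma Omega_bij:
  "bij_betw vec_nth (Omega n) (PiE UNIV (\<lambda>i. {0..2 * int (n$i) - 1}))"
  unfolding bij_betw_def
proof
  show "inj_on vec_nth (Omega n)" by (auto intro: inj_onI simp: vec_eq_iff)
  show "vec_nth ` Omega n = PiE UNIV (\<lambda>i. {0..2 * int (n$i) - 1})"
  proof (intro equalityI subsetI)
    fix g assume "g \<in> vec_nth ` Omega n" thus "g \<in> PiE UNIV (\<lambda>i. {0..2 * int (n$i) - 1})"
      by (auto simp: Omega_def)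
  next
    fix g assume g: "g \<in> PiE UNIV (\<lambda>i. {0..2 * int (n$i) - 1})"
    have "vec_lambda g \<in> Omega n" using g by (auto simp: Omega_def)
    moreover have "g = vec_nth (vec_lambda g)" by (rule ext) simp
    ultimately show "g \<in> vec_nth ` Omega n" by blast
  qed
qed

lemma finite_Omega: "finite (Omega n)"
  using bij_betw_finite[OF Omega_bij] by (simp add: finite_PiE)

lemma sum_Omega_prod:
  fixes F :: "'d::finite \<Rightarrow> int \<Rightarrow> 'c::comm_semiring_1"
  shows "(\<Sum>k\<in>Omega n. \<Prod>i\<in>UNIV. F i (k$i)) = (\<Prod>i\<in>UNIV. \<Sum>t\<in>{0..2 * int (n$i) - 1}. F i t)"
proof -
  have "(\<Prod>i\<in>UNIV. \<Sum>t\<in>{0..2 * int (n$i) - 1}. F i t)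
      = (\<Sum>g\<in>PiE UNIV (\<lambda>i. {0..2 * int (n$i) - 1}). \<Prod>i\<in>UNIV. F i (g i))"
    by (rule prod_sum_PiE) auto
  also have "\<dots> = (\<Sum>k\<in>Omega n. \<Prod>i\<in>UNIV. F i (k$i))"
    using sum.reindex_bij_betw[OF Omega_bij, of "\<lambda>g. \<Prod>i\<in>UNIV. F i (g i)"] by simp
  finally show ?thesis by simp
qed

lemma card_Omega: "card (Omega n) = Ncard n"
proof -
  have "real (card (Omega n)) = (\<Sum>k\<in>Omega n. \<Prod>i\<in>UNIV. (\<lambda>i t. 1::real) i (k$i))" by simp
  also have "\<dots> = (\<Prod>i\<in>UNIV. \<Sum>t\<in>{0..2 * int (n$i) - 1}. (1::real))"
    by (rule sum_Omega_prod)
  also have "\<dots> = (\<Prod>i\<in>UNIV. 2 * real (n$i))" by (intro prod.cong) auto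
  also have "\<dots> = real (Ncard n)" by (simp add: Ncard_def prod.distrib)
  finally show ?thesis by linarith
qed

lemma geom1:
  fixes m :: nat and v :: int
  assumes "m \<ge> 1"
  shows "(\<Sum>t\<in>{0..2 * int m - 1}. exp (\<i> * complex_of_real (real_of_int v * (pi * real_of_int t / real m))))
     = (if 2 * int m dvd v then of_nat (2 * m) else 0)"
proof -
  define z where "z = exp (\<i> * complex_of_real (pi * real_of_int v / real m))"
  have im: "{0..2 * int m - 1} = int ` {..<2*m}"
    proof (intro equalityI subsetI)
    fix x assume "x \<in> {0..2 * int m - 1}" thus "x \<in> int ` {..<2*m}"
      by (auto simp: image_iff intro!: bexI[of _ "nat x"])
  qed auto
  have "(\<Sum>t\<in>{0..2 * int m - 1}. exp (\<i> * complex_of_real (real_of_int v * (pi * real_of_int t / real m))))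
      = (\<Sum>t<2*m. exp (\<i> * complex_of_real (real_of_int v * (pi * real t / real m))))"
    unfolding im by (subst sum.reindex) (auto simp: inj_on_def)
  also have "\<dots> = (\<Sum>t<2*m. z ^ t)"
  proof (intro sum.cong refl)
    fix t
    have "exp (\<i> * complex_of_real (real_of_int v * (pi * real t / real m)))
        = exp (of_nat t * (\<i> * complex_of_real (pi * real_of_int v / real m)))"
      by (simp add: field_simps)
    also have "\<dots> = z ^ t" unfolding z_def by (rule exp_of_nat_mult)
    finally show "exp (\<i> * complex_of_real (real_of_int v * (pi * real t / real m))) = z ^ t" .
  qed
  also have "\<dots> = (if 2 * int m dvd v then of_nat (2 * m) else 0)"
  proof (cases "2 * int m dvd v")
    case True
    then obtain q where q: "v = 2 * int m * q" by (auto elim: dvdE)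
    have "z = exp ((2 * complex_of_int q * pi) * \<i>)"
      unfolding z_def q using assms by (simp add: field_simps)
    also have "\<dots> = 1" using exp_integer_2pi[of "of_int q"] by simp
    finally show ?thesis using True by simp
  next
    case False
    have z1: "z \<noteq> 1"
    proof
      assume "z = 1"
      then obtain q :: int where "pi * real_of_int v / real m = of_int (2 * q) * pi"
        unfolding z_def exp_eq_1 by auto
      hence "real_of_int v = real_of_int (2 * int m * q)" using assms by (simp add: field_simps)
      hence "v = 2 * int m * q" by linarith
      thus False using False by simp
    qed
    have "z ^ (2*m) = exp (of_nat (2*m) * (\<i> * complex_of_real (pi * real_of_int v / real m)))"
      unfolding z_def by (rule exp_of_nat_mult[symmetric])
    also have "\<dots> = exp ((2 * complex_of_int v * pi) * \<i>)"
      using assms by (simp add: field_simps)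
    also have "\<dots> = 1" using exp_integer_2pi[of "of_int v"] by simp
    finally have "z ^ (2*m) = 1" .
    thus ?thesis using False z1 by (simp add: geometric_sum)
  qed
  finally show ?thesis .
qed

definition cong2 :: "nat^'d \<Rightarrow> int^'d \<Rightarrow> int^'d \<Rightarrow> bool" where
  "cong2 n l j \<longleftrightarrow> (\<forall>i. 2 * int (n$i) dvd (l$i - j$i))"

lemma w_prod: "w n v k = (\<Prod>i\<in>UNIV. exp (\<i> * complex_of_real (real_of_int (v$i) * (pi * real_of_int (k$i) / real (n$i)))))"
  unfolding w_def ph_def idot_def grid_pt_def
  by (simp add: of_real_sum sum_distrib_left exp_sum)

lemma orth:
  assumes "\<forall>i. n$i \<ge> 1"
  shows "(\<Sum>k\<in>Omega n. w n v k) = (if cong2 n v 0 then of_nat (Ncard n) else 0)"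
proof -
  have "(\<Sum>k\<in>Omega n. w n v k) = (\<Prod>i\<in>UNIV. \<Sum>t\<in>{0..2 * int (n$i) - 1}.
          exp (\<i> * complex_of_real (real_of_int (v$i) * (pi * real_of_int t / real (n$i)))))"
    unfolding w_prod by (rule sum_Omega_prod)
  also have "\<dots> = (\<Prod>i\<in>UNIV. (if 2 * int (n$i) dvd v$i then of_nat (2 * n$i) else 0))"
    using assms by (intro prod.cong refl geom1) auto
  also have "\<dots> = (if cong2 n v 0 then of_nat (Ncard n) else 0)"
  proof (cases "cong2 n v 0")
    case True
    hence "(\<Prod>i\<in>UNIV. (if 2 * int (n$i) dvd v$i then of_nat (2 * n$i) else 0))
        = (\<Prod>i\<in>UNIV. (of_nat (2 * n$i) :: complex))"
      by (intro prod.cong) (auto simp: cong2_def)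
    also have "\<dots> = of_nat (Ncard n)" by (simp add: Ncard_def prod.distrib)
    finally show ?thesis using True by simp
  next
    case False
    then obtain i where "\<not> 2 * int (n$i) dvd v$i" by (auto simp: cong2_def)
    thus ?thesis using False by (intro trans[OF prod_zero]) auto
  qed
  finally show ?thesis .
qed

lemma w_period:
  assumes "cong2 n v 0"
  shows "w n v k = 1"
proof -
  have "\<forall>i. \<exists>q. v$i = 2 * int (n$i) * q" using assms by (auto simp: cong2_def elim!: dvdE)
  then obtain q where q: "\<And>i. v$i = 2 * int (n$i) * q i" by metis
  have "w n v k = (\<Prod>i\<in>UNIV. exp ((2 * complex_of_int (q i * k$i) * pi) * \<i>))"
    unfolding w_prod
  proof (intro prod.cong refl)
    fix i
    show "exp (\<i> * complex_of_real (real_of_int (v$i) * (pi * real_of_int (k$i) / real (n$i))))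
       = exp ((2 * complex_of_int (q i * k$i) * pi) * \<i>)"
    proof (cases "n$i = 0")
      case True thus ?thesis using q[of i] exp_integer_2pi[of "of_int (q i * k$i)"] by simp
    next
      case False thus ?thesis using q[of i] by (simp add: field_simps)
    qed
  qed
  also have "\<dots> = 1"
  proof (intro prod.neutral ballI)
    fix i show "exp ((2 * complex_of_int (q i * k$i) * pi) * \<i>) = 1"
      using exp_integer_2pi[of "of_int (q i * k$i)"] by simp
  qed
  finally show ?thesis .
qed

lemma cong2_0_iff: "cong2 n (l - j) 0 \<longleftrightarrow> cong2 n l j"
  by (simp add: cong2_def)
lemma cong2_sym: "cong2 n l j \<longleftrightarrow> cong2 n j l"
  unfolding cong2_def by (meson dvd_diff_commute)
lemma cong2_neg: "cong2 n (- l) (- j) \<longleftrightarrow> cong2 n l j"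
proof -
  have "\<And>i. (- l)$i - (- j)$i = - (l$i - j$i)" by simp
  thus ?thesis unfolding cong2_def by (metis dvd_minus_iff)
qed

lemma w_cong: assumes "cong2 n l j" shows "w n l k = w n j k"
proof -
  have "w n l k = w n (j + (l - j)) k" by simp
  also have "\<dots> = w n j k * w n (l - j) k" by (simp add: w_mult)
  also have "w n (l - j) k = 1" using assms by (intro w_period) (simp add: cong2_0_iff)
  finally show ?thesis by simp
qed

lemma summ:
  assumes "valid_kernel_coeffs a" "\<And>l. norm (g l) \<le> 1"
  shows "(\<lambda>l. complex_of_real (a l) * g l) summable_on UNIV"
proof -
  have "Infinite_Sum.abs_summable_on (\<lambda>l. complex_of_real (a l) * g l) UNIV"
  proof (rule Infinite_Sum.abs_summable_on_comparison_test)
  show "Infinite_Sum.abs_summable_on a UNIV" using assms(1) unfolding valid_kernel_coeffs_def by blast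
  fix l
  have "norm (complex_of_real (a l) * g l) = \<bar>a l\<bar> * norm (g l)" by (simp add: norm_mult)
  also have "\<dots> \<le> \<bar>a l\<bar> * 1" using assms(2)[of l] by (intro mult_left_mono) auto
  finally show "norm (complex_of_real (a l) * g l) \<le> norm (a l)" by simp
  qed
  thus ?thesis by (rule Infinite_Sum.abs_summable_summable)
qed

lemma summable_finsum:
  fixes f :: "'k \<Rightarrow> 'a \<Rightarrow> complex"
  assumes "finite A" "\<And>k. k \<in> A \<Longrightarrow> f k summable_on B"
  shows "(\<lambda>l. \<Sum>k\<in>A. f k l) summable_on B"
  using assms by (induction A rule: finite_induct) (auto intro: summable_on_add)

lemma infsum_finsum:
  fixes f :: "'k \<Rightarrow> 'a \<Rightarrow> complex"
  assumes "finite A" "\<And>k. k \<in> A \<Longrightarrow> f k summable_on B"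
  shows "infsum (\<lambda>l. \<Sum>k\<in>A. f k l) B = (\<Sum>k\<in>A. infsum (f k) B)"
  using assms
proof (induction A rule: finite_induct)
  case (insert x F)
  have "infsum (\<lambda>l. \<Sum>k\<in>insert x F. f k l) B = infsum (\<lambda>l. f x l + (\<Sum>k\<in>F. f k l)) B"
    using insert by simp
  also have "\<dots> = infsum (f x) B + infsum (\<lambda>l. \<Sum>k\<in>F. f k l) B"
    using insert by (intro infsum_add summable_finsum) auto
  finally show ?case using insert by simp
qed simp

lemma kernel_grid:
  "kernel a (grid_pt n m - grid_pt n k) = infsum (\<lambda>l. complex_of_real (a l) * (w n l m * w n (-l) k)) UNIV"
proof -
  have "\<And>l. exp (\<i> * complex_of_real (idot l (grid_pt n m - grid_pt n k)))
     = exp (\<i> * complex_of_real (idot l (grid_pt n m))) * exp (\<i> * complex_of_real (idot (-l) (grid_pt n k)))"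
    by (simp add: idot_minus2 idot_neg exp_add[symmetric] algebra_simps)
  thus ?thesis unfolding kernel_def w_def ph_def by simp
qed

lemma kernel_neg:
  "kernel a (0 - grid_pt n k) = infsum (\<lambda>l. complex_of_real (a l) * w n (-l) k) UNIV"
  unfolding kernel_def w_def ph_def
  by (simp add: idot_uminus2 idot_neg)




definition AA :: "(int^'d \<Rightarrow> real) \<Rightarrow> nat^'d \<Rightarrow> int^'d \<Rightarrow> complex" where
  "AA a n j = infsum (\<lambda>l. complex_of_real (a l) * (if cong2 n l j then 1 else 0)) UNIV"

lemma S1:
  assumes "valid_kernel_coeffs a" "\<forall>i. n$i \<ge> 1"
  shows "(\<Sum>m\<in>Omega n. w n (-j) m * kernel a (grid_pt n m - grid_pt n k))
       = of_nat (Ncard n) * w n (-j) k * AA a n j"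
proof -
  have "(\<Sum>m\<in>Omega n. w n (-j) m * kernel a (grid_pt n m - grid_pt n k))
      = (\<Sum>m\<in>Omega n. infsum (\<lambda>l. complex_of_real (a l) * (w n (-j) m * w n l m * w n (-l) k)) UNIV)"
    unfolding kernel_grid
    by (intro sum.cong refl) (simp add: infsum_cmult_right'[symmetric] mult_ac)
  also have "\<dots> = infsum (\<lambda>l. \<Sum>m\<in>Omega n. complex_of_real (a l) * (w n (-j) m * w n l m * w n (-l) k)) UNIV"
    by (rule infsum_finsum[symmetric]) (auto simp: finite_Omega norm_mult intro!: summ assms(1))
  also have "\<dots> = infsum (\<lambda>l. complex_of_real (a l) * (w n (-l) k * (\<Sum>m\<in>Omega n. w n (l - j) m))) UNIV"
  proof (intro infsum_cong)
    fix l
    have e: "\<And>m. w n (-j) m * w n l m = w n (l - j) m" by (simp add: w_mult)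
    have "(\<Sum>m\<in>Omega n. complex_of_real (a l) * (w n (-j) m * w n l m * w n (-l) k))
        = (\<Sum>m\<in>Omega n. (complex_of_real (a l) * w n (-l) k) * w n (l - j) m)"
      by (intro sum.cong refl) (simp only: e[symmetric] mult_ac)
    thus "(\<Sum>m\<in>Omega n. complex_of_real (a l) * (w n (-j) m * w n l m * w n (-l) k))
        = complex_of_real (a l) * (w n (-l) k * (\<Sum>m\<in>Omega n. w n (l - j) m))"
      by (simp add: sum_distrib_left mult_ac)
  qed
  also have "\<dots> = infsum (\<lambda>l. (of_nat (Ncard n) * w n (-j) k) * (complex_of_real (a l) * (if cong2 n l j then 1 else 0))) UNIV"
    by (intro infsum_cong) (auto simp: orth[OF assms(2)] cong2_0_iff w_cong cong2_neg)
  also have "\<dots> = of_nat (Ncard n) * w n (-j) k * AA a n j"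
    unfolding AA_def by (rule infsum_cmult_right')
  finally show ?thesis .
qed

lemma cosw: "complex_of_real (cos (idot j (grid_pt n k))) = (w n j k + w n (-j) k) / 2"
  unfolding w_def ph_def cos_of_real[symmetric] cos_exp_eq by (simp add: idot_neg)

lemma AA_neg:
  assumes "valid_kernel_coeffs a"
  shows "infsum (\<lambda>l. complex_of_real (a l) * (if cong2 n l (-j) then 1 else 0)) UNIV = AA a n j"
proof -
  have bij: "bij_betw uminus (UNIV :: (int^'d) set) UNIV"
    by (rule bij_betwI[of _ _ _ uminus]) auto
  have "infsum (\<lambda>l. complex_of_real (a l) * (if cong2 n l (-j) then 1 else 0)) UNIV
      = infsum (\<lambda>l. complex_of_real (a (-l)) * (if cong2 n (-l) (-j) then 1 else 0)) UNIV"
    by (rule infsum_reindex_bij_betw[OF bij, symmetric])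
  also have "\<dots> = AA a n j"
    unfolding AA_def
  proof (intro infsum_cong)
    fix l
    have "a (-l) = a l" using assms unfolding valid_kernel_coeffs_def by metis
    thus "complex_of_real (a (-l)) * (if cong2 n (-l) (-j) then 1 else 0)
        = complex_of_real (a l) * (if cong2 n l j then 1 else 0)"
      by (simp only: cong2_neg)
  qed
  finally show ?thesis .
qed

lemma norm_if01: "norm (if P then (1::complex) else 0) \<le> 1" by simp

lemma rho_AA:
  assumes "valid_kernel_coeffs a" "\<forall>i. n$i \<ge> 1"
  shows "rho a n j 0 = 2 * AA a n j"
proof -
  define N where "N = (of_nat (Ncard n) :: complex)"
  have N0: "N \<noteq> 0" unfolding N_def Ncard_def using assms(2)
    by (auto simp: prod_zero_iff Suc_le_eq)
  have "(\<Sum>k\<in>Omega n. complex_of_real (cos (idot j (grid_pt n k))) * kernel a (0 - grid_pt n k))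
      = (\<Sum>k\<in>Omega n. infsum (\<lambda>l. complex_of_real (a l) * ((w n j k + w n (-j) k) / 2 * w n (-l) k)) UNIV)"
    unfolding cosw kernel_neg
    by (intro sum.cong refl) (simp add: infsum_cmult_right'[symmetric] mult_ac)
  also have "\<dots> = infsum (\<lambda>l. \<Sum>k\<in>Omega n. complex_of_real (a l) * ((w n j k + w n (-j) k) / 2 * w n (-l) k)) UNIV"
  proof (rule infsum_finsum[symmetric])
    show "finite (Omega n)" by (rule finite_Omega)
    fix k
    show "(\<lambda>l. complex_of_real (a l) * ((w n j k + w n (-j) k) / 2 * w n (-l) k)) summable_on UNIV"
    proof (rule summ[OF assms(1)])
      fix l
      have "norm ((w n j k + w n (-j) k) / 2 * w n (-l) k) = norm (w n j k + w n (-j) k) / 2"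
        by (simp add: norm_mult norm_divide)
      also have "\<dots> \<le> (norm (w n j k) + norm (w n (-j) k)) / 2"
        by (intro divide_right_mono norm_triangle_ineq) auto
      finally show "norm ((w n j k + w n (-j) k) / 2 * w n (-l) k) \<le> 1" by simp
    qed
  qed
  also have "\<dots> = infsum (\<lambda>l. complex_of_real (a l) * (((\<Sum>k\<in>Omega n. w n (j - l) k) + (\<Sum>k\<in>Omega n. w n (-j - l) k)) / 2)) UNIV"
  proof (intro infsum_cong)
    fix l
    have e1: "\<And>k. w n j k * w n (-l) k = w n (j - l) k" by (simp add: w_mult)
    have e2: "\<And>k. w n (-j) k * w n (-l) k = w n (-j - l) k" by (simp add: w_mult)
    show "(\<Sum>k\<in>Omega n. complex_of_real (a l) * ((w n j k + w n (-j) k) / 2 * w n (-l) k))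
        = complex_of_real (a l) * (((\<Sum>k\<in>Omega n. w n (j - l) k) + (\<Sum>k\<in>Omega n. w n (-j - l) k)) / 2)"
      by (simp add: e1[symmetric] e2[symmetric] sum_distrib_left sum_divide_distrib sum.distrib[symmetric]
            distrib_right distrib_left add_divide_distrib mult_ac)
  qed
  also have "\<dots> = infsum (\<lambda>l. N / 2 * (complex_of_real (a l) * (if cong2 n l j then 1 else 0))
                   + N / 2 * (complex_of_real (a l) * (if cong2 n l (-j) then 1 else 0))) UNIV"
  proof (intro infsum_cong)
    fix l
    have c1: "cong2 n (j - l) 0 \<longleftrightarrow> cong2 n l j" by (metis cong2_0_iff cong2_sym)
    have c2: "cong2 n (-j - l) 0 \<longleftrightarrow> cong2 n l (-j)" by (metis cong2_0_iff cong2_sym)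
    show "complex_of_real (a l) * (((\<Sum>k\<in>Omega n. w n (j - l) k) + (\<Sum>k\<in>Omega n. w n (-j - l) k)) / 2)
        = N / 2 * (complex_of_real (a l) * (if cong2 n l j then 1 else 0))
                   + N / 2 * (complex_of_real (a l) * (if cong2 n l (-j) then 1 else 0))"
      unfolding orth[OF assms(2)] c1 c2 N_def by (simp add: field_simps)
  qed
  also have "\<dots> = N / 2 * AA a n j + N / 2 * AA a n j"
  proof -
    define h where "h = N / 2"
    have s1: "(\<lambda>l. h * (complex_of_real (a l) * (if cong2 n l j then 1 else 0))) summable_on UNIV"
      by (intro summable_on_cmult_right summ[OF assms(1)] norm_if01)
    have s2: "(\<lambda>l. h * (complex_of_real (a l) * (if cong2 n l (-j) then 1 else 0))) summable_on UNIV"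
      by (intro summable_on_cmult_right summ[OF assms(1)] norm_if01)
    have "infsum (\<lambda>l. h * (complex_of_real (a l) * (if cong2 n l j then 1 else 0))
                   + h * (complex_of_real (a l) * (if cong2 n l (-j) then 1 else 0))) UNIV
        = h * AA a n j + h * AA a n j"
      unfolding infsum_add[OF s1 s2] infsum_cmult_right' AA_neg[OF assms(1)] AA_def ..
    thus ?thesis unfolding h_def .
  qed
  finally have "(\<Sum>k\<in>Omega n. complex_of_real (cos (idot j (grid_pt n k))) * kernel a (0 - grid_pt n k))
      = N * AA a n j" by simp
  thus ?thesis unfolding rho_def using N0 by (simp add: N_def)
qed




lemma cong2_Omega:
  assumes "m \<in> Omega n" "k \<in> Omega n" "cong2 n m k"
  shows "m = k"
proof -
  have "m$i = k$i" for i
  proof (rule ccontr)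
    assume ne: "m$i \<noteq> k$i"
    have "2 * int (n$i) dvd (m$i - k$i)" using assms(3) by (simp add: cong2_def)
    hence "\<bar>2 * int (n$i)\<bar> \<le> \<bar>m$i - k$i\<bar>" using ne by (intro dvd_imp_le_int) auto
    moreover have "0 \<le> m$i" "m$i \<le> 2 * int (n$i) - 1" "0 \<le> k$i" "k$i \<le> 2 * int (n$i) - 1"
      using assms(1,2) by (auto simp: Omega_def)
    ultimately show False by linarith
  qed
  thus ?thesis by (simp add: vec_eq_iff)
qed

lemma zero_in_Omega: "\<forall>i. n$i \<ge> 1 \<Longrightarrow> 0 \<in> Omega n"
  by (auto simp: Omega_def Suc_le_eq)

lemma w_negswap: "w n (-j) k = w n (-k) j"
proof -
  have "ph n (-j) k = ph n (-k) j" using ph_sym[of n j k] unfolding ph_def by (simp only: idot_neg)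
  thus ?thesis by (simp add: w_def)
qed

lemma core:
  assumes va: "valid_kernel_coeffs a" and n1: "\<forall>i. n$i \<ge> 1"
    and rc: "\<forall>j\<in>Omega n. rho a n j 0 \<noteq> 0"
    and sum0: "(\<Sum>k\<in>Omega n. ck k) = 0"
    and s0: "\<And>x. complex_of_real c + (\<Sum>k\<in>Omega n. complex_of_real (ck k) * kernel a (x - grid_pt n k)) = 0"
  shows "c = 0 \<and> (\<forall>k\<in>Omega n. ck k = 0)"
proof -
  define N where "N = (of_nat (Ncard n) :: complex)"
  have N0: "N \<noteq> 0" unfolding N_def Ncard_def using n1
    by (auto simp: prod_zero_iff Suc_le_eq)
  have eq: "complex_of_real c * (\<Sum>m\<in>Omega n. w n (-j) m)
      + N * AA a n j * (\<Sum>k\<in>Omega n. complex_of_real (ck k) * w n (-j) k) = 0" for j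
  proof -
    have "0 = (\<Sum>m\<in>Omega n. w n (-j) m * (complex_of_real c
        + (\<Sum>k\<in>Omega n. complex_of_real (ck k) * kernel a (grid_pt n m - grid_pt n k))))"
      using s0 by simp
    also have "\<dots> = complex_of_real c * (\<Sum>m\<in>Omega n. w n (-j) m)
        + (\<Sum>m\<in>Omega n. \<Sum>k\<in>Omega n. complex_of_real (ck k) * (w n (-j) m * kernel a (grid_pt n m - grid_pt n k)))"
    proof -
      have "\<And>m. w n (-j) m * (complex_of_real c
        + (\<Sum>k\<in>Omega n. complex_of_real (ck k) * kernel a (grid_pt n m - grid_pt n k)))
        = complex_of_real c * w n (-j) m + (\<Sum>k\<in>Omega n. complex_of_real (ck k) * (w n (-j) m * kernel a (grid_pt n m - grid_pt n k)))"
        by (simp add: distrib_left sum_distrib_left mult.left_commute mult.commute)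
      thus ?thesis by (simp add: sum.distrib sum_distrib_left)
    qed
    also have "(\<Sum>m\<in>Omega n. \<Sum>k\<in>Omega n. complex_of_real (ck k) * (w n (-j) m * kernel a (grid_pt n m - grid_pt n k)))
        = (\<Sum>k\<in>Omega n. complex_of_real (ck k) * (\<Sum>m\<in>Omega n. w n (-j) m * kernel a (grid_pt n m - grid_pt n k)))"
      by (subst sum.swap) (simp add: sum_distrib_left)
    also have "\<dots> = (\<Sum>k\<in>Omega n. complex_of_real (ck k) * (N * w n (-j) k * AA a n j))"
      unfolding S1[OF va n1] N_def ..
    also have "\<dots> = N * AA a n j * (\<Sum>k\<in>Omega n. complex_of_real (ck k) * w n (-j) k)"
      by (simp add: sum_distrib_left mult_ac)
    finally show ?thesis by simp
  qed
  have c0: "c = 0"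
  proof -
    have "(\<Sum>m\<in>Omega n. w n (-0) m) = N"
      by (simp add: N_def card_Omega)
    moreover have "(\<Sum>k\<in>Omega n. complex_of_real (ck k) * w n (-0) k) = 0"
      using sum0 by (simp flip: of_real_sum)
    ultimately have "complex_of_real c * N = 0" using eq[of 0] by simp
    thus ?thesis using N0 by simp
  qed
  have chat: "(\<Sum>k\<in>Omega n. complex_of_real (ck k) * w n (-j) k) = 0" if j: "j \<in> Omega n" for j
  proof -
    have "AA a n j \<noteq> 0" using rc j rho_AA[OF va n1, of j] by auto
    moreover have "N * AA a n j * (\<Sum>k\<in>Omega n. complex_of_real (ck k) * w n (-j) k) = 0"
      using eq[of j] c0 by simp
    ultimately show ?thesis using N0 by simp
  qed
  have "ck m = 0" if m: "m \<in> Omega n" for m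
  proof -
    have "0 = (\<Sum>j\<in>Omega n. w n j m * (\<Sum>k\<in>Omega n. complex_of_real (ck k) * w n (-j) k))"
      using chat by simp
    also have "\<dots> = (\<Sum>k\<in>Omega n. complex_of_real (ck k) * (\<Sum>j\<in>Omega n. w n j m * w n (-j) k))"
    proof -
      have "\<And>j. w n j m * (\<Sum>k\<in>Omega n. complex_of_real (ck k) * w n (-j) k)
          = (\<Sum>k\<in>Omega n. complex_of_real (ck k) * (w n j m * w n (-j) k))"
        by (simp add: sum_distrib_left mult.left_commute)
      hence "(\<Sum>j\<in>Omega n. w n j m * (\<Sum>k\<in>Omega n. complex_of_real (ck k) * w n (-j) k))
          = (\<Sum>j\<in>Omega n. \<Sum>k\<in>Omega n. complex_of_real (ck k) * (w n j m * w n (-j) k))" by simp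
      also have "\<dots> = (\<Sum>k\<in>Omega n. \<Sum>j\<in>Omega n. complex_of_real (ck k) * (w n j m * w n (-j) k))"
        by (rule sum.swap)
      finally show ?thesis by (simp add: sum_distrib_left)
    qed
    also have "\<dots> = (\<Sum>k\<in>Omega n. complex_of_real (ck k) * (\<Sum>j\<in>Omega n. w n (m - k) j))"
    proof (intro sum.cong refl)
      fix k
      have "w n j m * w n (-j) k = w n (m - k) j" for j
      proof -
        have "w n j m * w n (-j) k = w n m j * w n (-k) j" by (simp only: w_sym[of n j m] w_negswap[of n j k])
        also have "\<dots> = w n (m - k) j" by (simp add: w_mult)
        finally show ?thesis .
      qed
      thus "complex_of_real (ck k) * (\<Sum>j\<in>Omega n. w n j m * w n (-j) k) = complex_of_real (ck k) * (\<Sum>j\<in>Omega n. w n (m - k) j)" by simp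
    qed
    also have "\<dots> = (\<Sum>k\<in>Omega n. if k = m then complex_of_real (ck k) * N else 0)"
    proof (intro sum.cong refl)
      fix k assume k: "k \<in> Omega n"
      have "cong2 n (m - k) 0 \<longleftrightarrow> k = m"
        using cong2_Omega[OF m k] by (auto simp: cong2_0_iff cong2_def)
      thus "complex_of_real (ck k) * (\<Sum>j\<in>Omega n. w n (m - k) j) = (if k = m then complex_of_real (ck k) * N else 0)"
        by (simp add: orth[OF n1] N_def)
    qed
    also have "\<dots> = complex_of_real (ck m) * N" using m by (simp add: sum.delta[OF finite_Omega] sum.delta'[OF finite_Omega])
    finally show ?thesis using N0 by simp
  qed
  thus ?thesis using c0 by blast
qed




lemma vs_rscale: "vector_space (rscale :: real \<Rightarrow> ('a \<Rightarrow> complex) \<Rightarrow> _)"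
  by unfold_locales (auto simp: rscale_def fun_eq_iff algebra_simps)

lemma shift_sum:
  fixes F :: "int^'d \<Rightarrow> complex"
  assumes "finite A" "0 \<in> A" "(\<Sum>k\<in>A. ck k) = 0"
  shows "(\<Sum>k\<in>A. complex_of_real (ck k) * F k) = (\<Sum>k\<in>A-{0}. complex_of_real (ck k) * (F k - F 0))"
proof -
  have c0: "ck 0 = - (\<Sum>k\<in>A-{0}. ck k)" using assms sum.remove[of A 0 ck] by simp
  have "(\<Sum>k\<in>A. complex_of_real (ck k) * F k) = complex_of_real (ck 0) * F 0 + (\<Sum>k\<in>A-{0}. complex_of_real (ck k) * F k)"
    using assms by (simp add: sum.remove)
  also have "\<dots> = (\<Sum>k\<in>A-{0}. complex_of_real (ck k) * F k) - (\<Sum>k\<in>A-{0}. complex_of_real (ck k) * F 0)"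
    unfolding c0 by (simp add: sum_distrib_right)
  also have "\<dots> = (\<Sum>k\<in>A-{0}. complex_of_real (ck k) * (F k - F 0))"
    by (simp add: sum_subtractf right_diff_distrib)
  finally show ?thesis .
qed

lemma fam:
  assumes va: "valid_kernel_coeffs a" and n1: "\<forall>i. n$i \<ge> 1"
    and rc: "\<forall>j\<in>Omega n. rho a n j 0 \<noteq> 0"
    and h: "\<And>x. (\<Sum>k\<in>Omega n. complex_of_real (u k) * (if k = 0 then 1
              else kernel a (x - grid_pt n k) - kernel a (x - grid_pt n 0))) = 0"
  shows "\<forall>k\<in>Omega n. u k = 0"
proof -
  have z: "0 \<in> Omega n" using zero_in_Omega[OF n1] .
  define ck where "ck t = (if t = 0 then - (\<Sum>k\<in>Omega n - {0}. u k) else u t)" for t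
  have s0: "(\<Sum>k\<in>Omega n. ck k) = 0"
    using sum.remove[OF finite_Omega z, of ck] by (simp add: ck_def)
  have "complex_of_real (u 0) + (\<Sum>k\<in>Omega n. complex_of_real (ck k) * kernel a (x - grid_pt n k)) = 0" for x
  proof -
    have "(\<Sum>k\<in>Omega n. complex_of_real (ck k) * kernel a (x - grid_pt n k))
        = (\<Sum>k\<in>Omega n-{0}. complex_of_real (ck k) * (kernel a (x - grid_pt n k) - kernel a (x - grid_pt n 0)))"
      by (rule shift_sum[OF finite_Omega z s0])
    also have "\<dots> = (\<Sum>k\<in>Omega n-{0}. complex_of_real (u k) * (if k = 0 then 1
              else kernel a (x - grid_pt n k) - kernel a (x - grid_pt n 0)))"
      by (intro sum.cong refl) (auto simp: ck_def)
    finally show ?thesis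
      using h[of x] sum.remove[OF finite_Omega z, of "\<lambda>k. complex_of_real (u k) * (if k = 0 then 1
              else kernel a (x - grid_pt n k) - kernel a (x - grid_pt n 0))"] by simp
  qed
  from core[OF va n1 rc s0 this] have "u 0 = 0" "\<forall>k\<in>Omega n. ck k = 0" by auto
  thus ?thesis by (auto simp: ck_def split: if_splits)
qed

lemma delta_sum:
  fixes F :: "int^'d \<Rightarrow> complex"
  assumes "finite A"
  shows "(\<Sum>t\<in>A. complex_of_real (if t = k then 1 else 0) * F t) = (if k \<in> A then F k else 0)"
proof -
  have "\<And>t. complex_of_real (if t = k then 1 else 0) * F t = (if t = k then F k else 0)" by simp
  thus ?thesis using assms by (simp add: sum.delta')
qed




theorem mainTheorem9:
  fixes a :: "int^'d \<Rightarrow> real" and n :: "nat^'d"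
  assumes "valid_kernel_coeffs a"
    and "\<forall>i. n$i \<ge> 1"
    and "\<forall>j\<in>Omega n. rho a n j 0 \<noteq> 0"
  shows "vector_space.dim rscale (SK a n) = Ncard n
     \<and> (\<forall>m::nat. (\<forall>i. n$i = m) \<longrightarrow> vector_space.dim rscale (SK a n) = (2 * m) ^ CARD('d))"
proof -
  note va = assms(1) and n1 = assms(2) and rc = assms(3)
  interpret V: vector_space "rscale :: real \<Rightarrow> (real^'d \<Rightarrow> complex) \<Rightarrow> _"
    by (rule vs_rscale)
  have z: "0 \<in> Omega n" using zero_in_Omega[OF n1] .
  define g where "g k = (\<lambda>x. if k = 0 then 1
              else kernel a (x - grid_pt n k) - kernel a (x - grid_pt n 0))" for k
  define B where "B = g ` Omega n"
  have famg: "\<forall>k\<in>Omega n. u k = 0" if "(\<Sum>k\<in>Omega n. rscale (u k) (g k)) = 0" for u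
  proof (rule fam[OF va n1 rc])
    fix x
    have "(\<Sum>k\<in>Omega n. rscale (u k) (g k)) x = 0" using that by simp
    thus "(\<Sum>k\<in>Omega n. complex_of_real (u k) * (if k = 0 then 1
              else kernel a (x - grid_pt n k) - kernel a (x - grid_pt n 0))) = 0"
      by (simp add: sum_fun_apply rscale_def g_def)
  qed
  have inj: "inj_on g (Omega n)"
  proof (rule inj_onI, rule ccontr)
    fix k k' assume k: "k \<in> Omega n" and k': "k' \<in> Omega n" and e: "g k = g k'" and ne: "k \<noteq> k'"
    define u where "u t = (if t = k then 1 else if t = k' then -1 else (0::real))" for t
    have "(\<Sum>t\<in>Omega n. rscale (u t) (g t)) = (\<Sum>t\<in>{k, k'}. rscale (u t) (g t))"
      using k k' by (intro sum.mono_neutral_right finite_Omega) (auto simp: u_def rscale_def fun_eq_iff)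
    also have "\<dots> = 0" using ne e by (simp add: u_def rscale_def fun_eq_iff)
    finally have "u k = 0" using famg k by blast
    thus False by (simp add: u_def)
  qed
  have cardB: "card B = Ncard n"
    unfolding B_def card_image[OF inj] card_Omega ..
  have finB: "finite B" unfolding B_def by (intro finite_imageI finite_Omega)
  have indep: "V.independent B"
  proof
    assume "V.dependent B"
    then obtain c where c: "\<exists>v\<in>B. c v \<noteq> 0" "(\<Sum>v\<in>B. rscale (c v) v) = 0"
      using V.dependent_finite[OF finB] by blast
    have "(\<Sum>k\<in>Omega n. rscale (c (g k)) (g k)) = 0"
      using c(2) unfolding B_def sum.reindex[OF inj] by simp
    hence "\<forall>k\<in>Omega n. c (g k) = 0" by (rule famg)
    thus False using c(1) unfolding B_def by auto
  qed
  have BSK: "B \<subseteq> SK a n"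
  proof
    fix f assume "f \<in> B"
    then obtain k where k: "k \<in> Omega n" and f: "f = g k" unfolding B_def by blast
    show "f \<in> SK a n"
    proof (cases "k = 0")
      case True
      show ?thesis unfolding SK_def f g_def using True
        by (intro CollectI exI[of _ 1] exI[of _ "\<lambda>_. 0"]) (simp add: fun_eq_iff)
    next
      case False
      define ck where "ck t = (if t = k then 1 else 0) - (if t = 0 then 1 else (0::real))" for t
      have "(\<Sum>t\<in>Omega n. ck t) = 0"
        using k z by (simp add: ck_def sum_subtractf sum.delta[OF finite_Omega])
      moreover have "f = (\<lambda>x. complex_of_real 0 + (\<Sum>t\<in>Omega n. complex_of_real (ck t) * kernel a (x - grid_pt n t)))"
      proof
        fix x
        have "(\<Sum>t\<in>Omega n. complex_of_real (ck t) * kernel a (x - grid_pt n t))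
            = (\<Sum>t\<in>Omega n. complex_of_real (if t = k then 1 else 0) * kernel a (x - grid_pt n t))
              - (\<Sum>t\<in>Omega n. complex_of_real (if t = 0 then 1 else 0) * kernel a (x - grid_pt n t))"
          unfolding ck_def of_real_diff left_diff_distrib sum_subtractf ..
        also have "\<dots> = kernel a (x - grid_pt n k) - kernel a (x - grid_pt n 0)"
          unfolding delta_sum[OF finite_Omega] using k z by simp
        finally show "f x = complex_of_real 0 + (\<Sum>t\<in>Omega n. complex_of_real (ck t) * kernel a (x - grid_pt n t))"
          using False by (simp add: f g_def)
      qed
      ultimately show ?thesis unfolding SK_def by blast
    qed
  qed
  have SKB: "SK a n \<subseteq> V.span B"
  proof
    fix s assume "s \<in> SK a n"
    then obtain c ck where s0: "(\<Sum>k\<in>Omega n. ck k) = 0"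
      and s: "s = (\<lambda>x. complex_of_real c + (\<Sum>k\<in>Omega n. complex_of_real (ck k) * kernel a (x - grid_pt n k)))"
      unfolding SK_def by blast
    have "s = rscale c (g 0) + (\<Sum>k\<in>Omega n - {0}. rscale (ck k) (g k))"
    proof
      fix x
      have "(\<Sum>k\<in>Omega n. complex_of_real (ck k) * kernel a (x - grid_pt n k))
          = (\<Sum>k\<in>Omega n-{0}. complex_of_real (ck k) * (kernel a (x - grid_pt n k) - kernel a (x - grid_pt n 0)))"
        by (rule shift_sum[OF finite_Omega z s0])
      also have "\<dots> = (\<Sum>k\<in>Omega n - {0}. rscale (ck k) (g k) x)"
        by (intro sum.cong refl) (auto simp: rscale_def g_def)
      finally show "s x = (rscale c (g 0) + (\<Sum>k\<in>Omega n - {0}. rscale (ck k) (g k))) x"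
        by (simp add: s sum_fun_apply rscale_def g_def)
    qed
    also have "\<dots> \<in> V.span B"
      using z unfolding B_def
      by (intro V.span_add V.span_scale V.span_sum V.span_base) auto
    finally show "s \<in> V.span B" .
  qed
  have dimeq: "V.dim (SK a n) = Ncard n"
    using V.basis_card_eq_dim[OF BSK SKB indep] cardB by simp
  show ?thesis
  proof (intro conjI allI impI)
    show "V.dim (SK a n) = Ncard n" by (rule dimeq)
    fix m :: nat assume "\<forall>i. n$i = m"
    thus "V.dim (SK a n) = (2 * m) ^ CARD('d)"
      unfolding dimeq Ncard_def by (simp add: power_mult_distrib)
  qed
qed


end
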